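(* Let $T\in\{0,1\}^{\mathbb N}$ and let $\widetilde x_0=(x_0,x_1,\dots)\in\widetilde X_T$ be such that $x_n=0$ for some $n\in\mathbb N$, so that $\widetilde x_0=(f^n(0),f^{n-1}(0),\dots,f(0),0,\dots)$ and $T(n)=0$. Let $T'\in\{0,1\}^{\mathbb N}$ satisfy $T'(k)=T(k)$ for $k\ne n$ and $T'(n)=1$. Then every neighborhood of $\widetilde x_0$ in $\widetilde X$ contains, for some $\varepsilon>0$, the set $$\{\widetilde x=(x_0',x_1',\dots)\in\widetilde X_{T'}:\ x_0'\in(f^n(0)-\varepsilon,f^n(0)+\varepsilon)\}.$$
   Context: Standing setup. Fix real numbers $\rho,\delta,\gamma,\alpha$ with $0<\rho<1$, $\delta>0$, $\gamma>-\delta/\rho$, $-\delta/\rho<\alpha<0$. Define $f:[0,1]\to[0,1]$ by $f(x)=f_0(x):=\frac{\alpha x-\alpha\rho}{\gamma x+\delta}$ for $x\in[0,\rho]$ and $f(x)=f_1(x):=\frac{x-\rho}{1-\rho}$ for $x\in(\rho,1]$. Put $\rho_1:=f_0(0)$. Then $f_0$ is a decreasing bijection $[0,\rho]\to[0,\rho_1]$ and $f_1$ is an increasing bijection $(\rho,1]\to(0,1]$; write $f_0^{-1}:[0,\rho_1]\to[0,\rho]$ and $f_1^{-1}:(0,1]\to(\rho,1]$. The inverse limit is $\widetilde X=\{(x_0,x_1,\dots)\in[0,1]^{\mathbb N}: f(x_{n+1})=x_n \ \forall n\}$ with the product topology. A point $\widetilde x=(x_0,x_1,\dots)\in\widetilde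 X$ is of type $T\in\{0,1\}^{\mathbb N}$ if $x_{n+1}=f_{T(n)}^{-1}(x_n)$ for all $n$ (i.e. $x_{n+1}\in[0,\rho]$ when $T(n)=0$ and $x_{n+1}\in(\rho,1]$ when $T(n)=1$); $\widetilde X_T$ denotes the set of points of type $T$. *)

theory Defs
  imports "HOL-Analysis.Analysis"
begin

definition f0 :: "real \<Rightarrow> real \<Rightarrow> real \<Rightarrow> real \<Rightarrow> real \<Rightarrow> real" where
  "f0 \<rho> \<delta> \<gamma> \<alpha> x = (\<alpha> * x - \<alpha> * \<rho>) / (\<gamma> * x + \<delta>)"

definition f1 :: "real \<Rightarrow> real \<Rightarrow> real" where
  "f1 \<rho> x = (x - \<rho>) / (1 - \<rho>)"

definition fmap :: "real \<Rightarrow> real \<Rightarrow> real \<Rightarrow> real \<Rightarrow> real \<Rightarrow> real" where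
  "fmap \<rho> \<delta> \<gamma> \<alpha> x = (if x \<le> \<rho> then f0 \<rho> \<delta> \<gamma> \<alpha> x else f1 \<rho> x)"

text \<open>The inverse limit: sequences in [0,1] with f(x (n+1)) = x n.
  Its topology is the product topology on nat => real (Function_Topology).\<close>

definition Xtilde :: "real \<Rightarrow> real \<Rightarrow> real \<Rightarrow> real \<Rightarrow> (nat \<Rightarrow> real) set" where
  "Xtilde \<rho> \<delta> \<gamma> \<alpha> =
     {x. (\<forall>k. x k \<in> {0..1}) \<and> (\<forall>k. fmap \<rho> \<delta> \<gamma> \<alpha> (x (Suc k)) = x k)}"

definition Xtype :: "real \<Rightarrow> real \<Rightarrow> real \<Rightarrow> real \<Rightarrow> (nat \<Rightarrow> nat) \<Rightarrow> (nat \<Rightarrow> real) set" where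
  "Xtype \<rho> \<delta> \<gamma> \<alpha> T =
     {x \<in> Xtilde \<rho> \<delta> \<gamma> \<alpha>.
        \<forall>k. (T k = 0 \<longrightarrow> x (Suc k) \<in> {0..\<rho>}) \<and> (T k = 1 \<longrightarrow> x (Suc k) \<in> {\<rho><..1})}"

end

theory Submission
  imports Defs
begin

lemma open_nbhd:
  fixes W :: "(nat \<Rightarrow> real) set"
  assumes "open W" "x \<in> W"
  shows "\<exists>F e. finite F \<and> e > 0 \<and> (\<forall>y. (\<forall>i\<in>F. \<bar>y i - x i\<bar> < e) \<longrightarrow> y \<in> W)"
proof -
  have "openin (product_topology (\<lambda>i. euclidean) UNIV) W" using assms unfolding open_fun_def by auto
  from product_topology_open_contains_basis[OF this assms(2)]
  obtain X where X: "x \<in> (\<Pi>\<^sub>E i\<in>UNIV. X i)" "\<forall>i. open (X i)" "finite {i. X i \<noteq> UNIV}"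
     "(\<Pi>\<^sub>E i\<in>UNIV. X i) \<subseteq> W" by auto
  define F where "F = {i. X i \<noteq> UNIV}"
  have "\<forall>i. \<exists>e>0. ball (x i) e \<subseteq> X i"
    using X(1,2) by (meson PiE_E UNIV_I open_contains_ball)
  then obtain e where e: "\<And>i. e i > 0" "\<And>i. ball (x i) (e i) \<subseteq> X i" by metis
  define e0 where "e0 = Min (insert 1 (e ` F))"
  have fin: "finite F" using X(3) F_def by simp
  have e0pos: "e0 > 0" unfolding e0_def using fin e by auto
  have e0le: "\<And>i. i \<in> F \<Longrightarrow> e0 \<le> e i" unfolding e0_def using fin by auto
  show ?thesis
  proof (intro exI conjI allI impI)
    show "finite F" by fact
    show "e0 > 0" by fact
    fix y assume H: "\<forall>i\<in>F. \<bar>y i - x i\<bar> < e0"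
    have "\<forall>i. y i \<in> X i"
    proof
      fix i show "y i \<in> X i"
      proof (cases "i \<in> F")
        case True
        then have "y i \<in> ball (x i) (e i)" using H e0le[OF True] by (auto simp: dist_real_def abs_minus_commute)
        then show ?thesis using e(2)[of i] by blast
      next
        case False then show ?thesis unfolding F_def by auto
      qed
    qed
    then have "y \<in> (\<Pi>\<^sub>E i\<in>UNIV. X i)" by (simp add: PiE_iff)
    then show "y \<in> W" using X(4) by auto
  qed
qed

lemma den_pos:
  fixes \<rho> \<delta> \<gamma> a :: real
  assumes "0 < \<rho>" "\<delta> > 0" "\<gamma> * \<rho> + \<delta> > 0" "a \<in> {0..\<rho>}"
  shows "\<gamma> * a + \<delta> > 0"
proof (cases "\<gamma> \<ge> 0")
  case True then have "\<gamma> * a \<ge> 0" using assms by (intro mult_nonneg_nonneg) auto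
  then show ?thesis using assms by linarith
next
  case False then have "\<gamma> * a \<ge> \<gamma> * \<rho>" using assms by (simp add: mult_left_mono_neg)
  then show ?thesis using assms by linarith
qed

lemma f0_diff:
  assumes "0 < \<rho>" "\<delta> > 0" "\<gamma> * \<rho> + \<delta> > 0" "a \<in> {0..\<rho>}" "b \<in> {0..\<rho>}"
  shows "f0 \<rho> \<delta> \<gamma> \<alpha> a - f0 \<rho> \<delta> \<gamma> \<alpha> b = \<alpha> * (\<delta> + \<rho> * \<gamma>) * (a - b) / ((\<gamma> * a + \<delta>) * (\<gamma> * b + \<delta>))"
proof -
  have pa: "\<gamma> * a + \<delta> > 0"
  proof (cases "\<gamma> \<ge> 0")
    case True then show ?thesis using assms by (simp add: add_nonneg_pos)
  next
    case False then have "\<gamma> * a \<ge> \<gamma> * \<rho>" using assms by (simp add: mult_left_mono_neg)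
    then show ?thesis using assms by linarith
  qed
  have pb: "\<gamma> * b + \<delta> > 0"
  proof (cases "\<gamma> \<ge> 0")
    case True then show ?thesis using assms by (simp add: add_nonneg_pos)
  next
    case False then have "\<gamma> * b \<ge> \<gamma> * \<rho>" using assms by (simp add: mult_left_mono_neg)
    then show ?thesis using assms by linarith
  qed
  show ?thesis unfolding f0_def using pa pb by (simp add: field_simps)
qed


lemma contr:
  assumes "0 < \<rho>" "\<rho> < 1" "\<delta> > 0" "\<gamma> * \<rho> + \<delta> > 0" "\<alpha> < 0"
  shows "\<exists>K\<ge>1. \<forall>a b. ((a \<in> {0..\<rho>} \<and> b \<in> {0..\<rho>}) \<or> (a \<in> {\<rho>..1} \<and> b \<in> {\<rho>..1})) \<longrightarrow>
     \<bar>a - b\<bar> \<le> K * \<bar>fmap \<rho> \<delta> \<gamma> \<alpha> a - fmap \<rho> \<delta> \<gamma> \<alpha> b\<bar>"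
proof -
  define M where "M = max \<delta> (\<gamma> * \<rho> + \<delta>)"
  define c where "c = - \<alpha> * (\<delta> + \<rho> * \<gamma>)"
  have "- \<alpha> > 0" "\<delta> + \<rho> * \<gamma> > 0" using assms by (auto simp: mult.commute)
  then have cpos: "c > 0" unfolding c_def by (rule mult_pos_pos)

  define L where "L = M^2 / c"
  define K where "K = max 1 L"
  have bnd: "0 < \<gamma> * a + \<delta> \<and> \<gamma> * a + \<delta> \<le> M" if "a \<in> {0..\<rho>}" for a
  proof (cases "\<gamma> \<ge> 0")
    case True
    then have "\<gamma> * a \<le> \<gamma> * \<rho>" using that by (simp add: mult_left_mono)
    then show ?thesis using assms True that unfolding M_def by (simp add: add_nonneg_pos)
  next
    case False then have "\<gamma> * a \<ge> \<gamma> * \<rho>" "\<gamma> * a \<le> 0" using that assms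
      by (auto simp add: mult_left_mono_neg mult_nonpos_nonneg)
    then show ?thesis using assms unfolding M_def by linarith
  qed
  have A: "\<bar>a - b\<bar> \<le> K * \<bar>fmap \<rho> \<delta> \<gamma> \<alpha> a - fmap \<rho> \<delta> \<gamma> \<alpha> b\<bar>" if "a \<in> {0..\<rho>}" "b \<in> {0..\<rho>}" for a b
  proof -
    have fa: "fmap \<rho> \<delta> \<gamma> \<alpha> a = f0 \<rho> \<delta> \<gamma> \<alpha> a" "fmap \<rho> \<delta> \<gamma> \<alpha> b = f0 \<rho> \<delta> \<gamma> \<alpha> b"
      using that by (auto simp: fmap_def)
    define pa where "pa = \<gamma> * a + \<delta>"
    define pb where "pb = \<gamma> * b + \<delta>"
    have pa: "0 < pa" "pa \<le> M" and pb: "0 < pb" "pb \<le> M" using bnd that pa_def pb_def by auto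
    have d: "f0 \<rho> \<delta> \<gamma> \<alpha> a - f0 \<rho> \<delta> \<gamma> \<alpha> b = - c * (a - b) / (pa * pb)"
      using f0_diff[OF assms(1,3,4) that, of \<alpha>] unfolding c_def pa_def pb_def by simp
    have "\<bar>f0 \<rho> \<delta> \<gamma> \<alpha> a - f0 \<rho> \<delta> \<gamma> \<alpha> b\<bar> = c * \<bar>a - b\<bar> / (pa * pb)"
      unfolding d using cpos pa pb by (simp add: abs_mult abs_divide)
    then have e: "\<bar>a - b\<bar> = \<bar>f0 \<rho> \<delta> \<gamma> \<alpha> a - f0 \<rho> \<delta> \<gamma> \<alpha> b\<bar> * (pa * pb) / c"
      using cpos pa pb by (simp add: field_simps)
    have "pa * pb \<le> M^2" using pa pb by (simp add: power2_eq_square mult_mono)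
    then have "(pa * pb) / c \<le> L" unfolding L_def using cpos by (simp add: divide_right_mono)
    also have "L \<le> K" unfolding K_def by simp
    finally have "\<bar>a - b\<bar> \<le> \<bar>f0 \<rho> \<delta> \<gamma> \<alpha> a - f0 \<rho> \<delta> \<gamma> \<alpha> b\<bar> * K"
      unfolding e by (metis mult_left_mono abs_ge_zero times_divide_eq_right)
    then show ?thesis using fa by (simp add: mult.commute)
  qed
  have B: "\<bar>a - b\<bar> \<le> K * \<bar>fmap \<rho> \<delta> \<gamma> \<alpha> a - fmap \<rho> \<delta> \<gamma> \<alpha> b\<bar>" if "a \<in> {\<rho>..1}" "b \<in> {\<rho>..1}" for a b
  proof -
    have f1e: "fmap \<rho> \<delta> \<gamma> \<alpha> z = f1 \<rho> z" if "z \<ge> \<rho>" for z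
      using that by (auto simp: fmap_def f0_def f1_def)
    have "fmap \<rho> \<delta> \<gamma> \<alpha> a - fmap \<rho> \<delta> \<gamma> \<alpha> b = (a - b) / (1 - \<rho>)"
      using that f1e[of a] f1e[of b] assms by (simp add: f1_def diff_divide_distrib)
    then have "\<bar>fmap \<rho> \<delta> \<gamma> \<alpha> a - fmap \<rho> \<delta> \<gamma> \<alpha> b\<bar> = \<bar>a - b\<bar> / (1 - \<rho>)" using assms by simp
    moreover have "\<bar>a - b\<bar> * (1 - \<rho>) \<le> \<bar>a - b\<bar> * 1" using assms by (intro mult_left_mono) auto
    then have "\<bar>a - b\<bar> \<le> \<bar>a - b\<bar> / (1 - \<rho>)" using assms by (simp add: le_divide_eq)
    moreover have "1 \<le> K" unfolding K_def by simp
    ultimately have "\<bar>a - b\<bar> \<le> \<bar>fmap \<rho> \<delta> \<gamma> \<alpha> a - fmap \<rho> \<delta> \<gamma> \<alpha> b\<bar>" by simp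
    moreover have "1 * \<bar>fmap \<rho> \<delta> \<gamma> \<alpha> a - fmap \<rho> \<delta> \<gamma> \<alpha> b\<bar> \<le> K * \<bar>fmap \<rho> \<delta> \<gamma> \<alpha> a - fmap \<rho> \<delta> \<gamma> \<alpha> b\<bar>"
      using \<open>1 \<le> K\<close> by (intro mult_right_mono) auto
    ultimately show ?thesis by simp
  qed
  show ?thesis using A B unfolding K_def by (intro exI[of _ K]) (auto simp: K_def)
qed


theorem lemma3:
  fixes \<rho> \<delta> \<gamma> \<alpha> :: real
    and T T' :: "nat \<Rightarrow> nat" and x :: "nat \<Rightarrow> real" and n :: nat
    and N :: "(nat \<Rightarrow> real) set"
  assumes "0 < \<rho>" "\<rho> < 1" "\<delta> > 0" "\<gamma> > - \<delta> / \<rho>" "- \<delta> / \<rho> < \<alpha>" "\<alpha> < 0"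
    and "\<forall>k. T k \<in> {0, 1}"
    and "x \<in> Xtype \<rho> \<delta> \<gamma> \<alpha> T"
    and "x n = 0"
    and "\<forall>k. k \<noteq> n \<longrightarrow> T' k = T k"
    and "T' n = 1"
    and "\<exists>W. open W \<and> x \<in> W \<and> W \<inter> Xtilde \<rho> \<delta> \<gamma> \<alpha> \<subseteq> N"
  shows "\<exists>\<epsilon>>0. {y \<in> Xtype \<rho> \<delta> \<gamma> \<alpha> T'.
            y 0 \<in> {(fmap \<rho> \<delta> \<gamma> \<alpha> ^^ n) 0 - \<epsilon> <..< (fmap \<rho> \<delta> \<gamma> \<alpha> ^^ n) 0 + \<epsilon>}} \<subseteq> N"
proof -
  let ?f = "fmap \<rho> \<delta> \<gamma> \<alpha>"
  have "- \<delta> / \<rho> * \<rho> < \<gamma> * \<rho>" using assms(1,4) by (rule mult_strict_right_mono[rotated])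
  then have gr: "\<gamma> * \<rho> + \<delta> > 0" using assms(1) by simp
  obtain K where K1: "K \<ge> 1" and K: "\<And>a b. ((a \<in> {0..\<rho>} \<and> b \<in> {0..\<rho>}) \<or> (a \<in> {\<rho>..1} \<and> b \<in> {\<rho>..1})) \<Longrightarrow>
     \<bar>a - b\<bar> \<le> K * \<bar>?f a - ?f b\<bar>"
    using contr[OF assms(1,2,3) gr assms(6)] by blast
  obtain W where W: "open W" "x \<in> W" "W \<inter> Xtilde \<rho> \<delta> \<gamma> \<alpha> \<subseteq> N" using assms(12) by blast
  obtain F e where Fe: "finite F" "e > 0" "\<And>y. (\<forall>i\<in>F. \<bar>y i - x i\<bar> < e) \<Longrightarrow> y \<in> W"
    using open_nbhd[OF W(1,2)] by blast
  have xX: "\<And>k. x k \<in> {0..1}" "\<And>k. ?f (x (Suc k)) = x k"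
    and xT: "\<And>k. T k = 0 \<Longrightarrow> x (Suc k) \<in> {0..\<rho>}" "\<And>k. T k = 1 \<Longrightarrow> x (Suc k) \<in> {\<rho><..1}"
    using assms(8) unfolding Xtype_def Xtilde_def by auto
  have x0: "(?f ^^ k) (x k) = x 0" for k
  proof (induction k)
    case 0 then show ?case by simp
  next
    case (Suc k)
    have "(?f ^^ Suc k) (x (Suc k)) = (?f ^^ k) (?f (x (Suc k)))" by (simp only: funpow_Suc_right o_apply)
    then show ?case using Suc xX(2) by simp
  qed
  have x0n: "(?f ^^ n) 0 = x 0" using x0[of n] assms(9) by simp
  have xn1: "x (Suc n) = \<rho>"
  proof (cases "T n = 0")
    case True
    then have h: "x (Suc n) \<in> {0..\<rho>}" by (rule xT)
    then have "f0 \<rho> \<delta> \<gamma> \<alpha> (x (Suc n)) = 0" using xX(2)[of n] assms(9) by (simp add: fmap_def)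
    moreover have "\<gamma> * x (Suc n) + \<delta> \<noteq> 0"
      using den_pos[OF assms(1,3) gr h] by simp
    ultimately have "\<alpha> * (x (Suc n) - \<rho>) = 0" unfolding f0_def by (simp add: right_diff_distrib)
    then show ?thesis using assms(6) by simp
  next
    case False
    moreover have "T n \<in> {0, 1}" using assms(7) by blast
    ultimately have "T n = 1" by simp
    then have h: "x (Suc n) \<in> {\<rho><..1}" by (rule xT(2))
    then have "f1 \<rho> (x (Suc n)) = 0" using xX(2)[of n] assms(9) by (simp add: fmap_def)
    then have "x (Suc n) = \<rho>" using assms(2) by (simp add: f1_def)
    then show ?thesis using h by simp
  qed
  define Mx where "Mx = Max (insert 1 ((\<lambda>k. K ^ k) ` F))"
  have Mx1: "Mx \<ge> 1" unfolding Mx_def using Fe(1) by simp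
  have MxK: "\<And>k. k \<in> F \<Longrightarrow> K ^ k \<le> Mx" unfolding Mx_def using Fe(1) by simp
  define \<epsilon> where "\<epsilon> = e / Mx"
  have epos: "\<epsilon> > 0" unfolding \<epsilon>_def using Fe(2) Mx1 by simp
  show ?thesis
  proof (intro exI conjI subsetI)
    show "\<epsilon> > 0" by fact
    fix y assume "y \<in> {y \<in> Xtype \<rho> \<delta> \<gamma> \<alpha> T'.
            y 0 \<in> {(?f ^^ n) 0 - \<epsilon> <..< (?f ^^ n) 0 + \<epsilon>}}"
    then have yX: "y \<in> Xtilde \<rho> \<delta> \<gamma> \<alpha>" and y0: "\<bar>y 0 - x 0\<bar> < \<epsilon>"
      and yT: "\<And>k. T' k = 0 \<Longrightarrow> y (Suc k) \<in> {0..\<rho>}" "\<And>k. T' k = 1 \<Longrightarrow> y (Suc k) \<in> {\<rho><..1}"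
      unfolding Xtype_def x0n by auto
    have yf: "\<And>k. ?f (y (Suc k)) = y k" using yX unfolding Xtilde_def by auto
    have cl: "\<bar>y k - x k\<bar> \<le> K ^ k * \<bar>y 0 - x 0\<bar>" for k
    proof (induction k)
      case 0 then show ?case by simp
    next
      case (Suc k)
      have br: "(y (Suc k) \<in> {0..\<rho>} \<and> x (Suc k) \<in> {0..\<rho>}) \<or> (y (Suc k) \<in> {\<rho>..1} \<and> x (Suc k) \<in> {\<rho>..1})"
      proof (cases "k = n")
        case True then show ?thesis using yT(2)[of n] assms(11) xn1 assms(2) by auto
      next
        case False
        then have "T' k = T k" using assms(10) by auto
        have "T k = 0 \<or> T k = 1" using assms(7) by auto
        then show ?thesis
        proof
          assume "T k = 0" then show ?thesis using \<open>T' k = T k\<close> yT(1)[of k] xT(1)[of k] by simp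
        next
          assume "T k = 1" then show ?thesis using \<open>T' k = T k\<close> yT(2)[of k] xT(2)[of k] by simp
        qed
      qed
      have "\<bar>y (Suc k) - x (Suc k)\<bar> \<le> K * \<bar>y k - x k\<bar>"
        using K[OF br] yf xX(2) by simp
      also have "\<dots> \<le> K * (K ^ k * \<bar>y 0 - x 0\<bar>)" using Suc K1 by (intro mult_left_mono) auto
      finally show ?case by simp
    qed
    have "\<forall>i\<in>F. \<bar>y i - x i\<bar> < e"
    proof
      fix i assume i: "i \<in> F"
      have Kp: "K ^ i > 0" using K1 by simp
      have "\<bar>y i - x i\<bar> \<le> K ^ i * \<bar>y 0 - x 0\<bar>" by (rule cl)
      also have "\<dots> < K ^ i * \<epsilon>" using y0 Kp by simp
      also have "\<dots> \<le> Mx * \<epsilon>" using MxK[OF i] epos by (simp add: mult_right_mono)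
      also have "\<dots> = e" unfolding \<epsilon>_def using Mx1 by simp
      finally show "\<bar>y i - x i\<bar> < e" .
    qed
    then have "y \<in> W" by (rule Fe(3))
    then show "y \<in> N" using W(3) yX by auto
  qed
qed

end
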